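(* For $n\ge 2$, the quantity $|\mathcal{I}^{(n)}_{p_k}(P_n^* )|$, as $k$ ranges over $1\le k\le n$, is maximized at $k=2$ and at $k=n-1$.
   Context: $\mathcal{I}^{(r)}_v(G)$ denotes the family of independent $r$-sets (sets of $r$ pairwise non-adjacent vertices) of a graph $G$ containing the vertex $v$. For a graph $G$ with vertices $x_1,\dots,x_n$, the pendant graph $G^*$ has vertex set $\{x_1,\dots,x_n\}\sqcup\{p_1,\dots,p_n\}$ and edge set $E(G)\sqcup\{x_1p_1,\dots,x_np_n\}$. $P_n$ is the path with vertices $x_1,\dots,x_n$ and edges $x_jx_{j+1}$, and $P_n^*$ its pendant graph. *)

theory Defs
  imports Main
begin

text \<open>A (simple) graph is given by a vertex set V and a symmetric, irreflexive adjacency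
predicate adj.  The family of independent r-sets of (V, adj) containing v:\<close>
definition indep_sets_containing ::
  "'a set \<Rightarrow> ('a \<Rightarrow> 'a \<Rightarrow> bool) \<Rightarrow> nat \<Rightarrow> 'a \<Rightarrow> 'a set set" where
  "indep_sets_containing V adj r v =
     {S. S \<subseteq> V \<and> card S = r \<and> v \<in> S \<and> (\<forall>x\<in>S. \<forall>y\<in>S. \<not> adj x y)}"

text \<open>Pendant graph G*: vertices Inl x (the original x) and Inr x (the pendant p_x);
edges of G plus x p_x for each x.\<close>
definition pendant_vertices :: "'a set \<Rightarrow> ('a + 'a) set" where
  "pendant_vertices V = V <+> V"

fun pendant_adj :: "('a \<Rightarrow> 'a \<Rightarrow> bool) \<Rightarrow> 'a + 'a \<Rightarrow> 'a + 'a \<Rightarrow> bool" where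
  "pendant_adj adj (Inl a) (Inl b) = adj a b"
| "pendant_adj adj (Inl a) (Inr b) = (a = b)"
| "pendant_adj adj (Inr a) (Inl b) = (a = b)"
| "pendant_adj adj (Inr a) (Inr b) = False"

definition path_vertices :: "nat \<Rightarrow> nat set" where
  "path_vertices n = {1..n}"

definition path_adj :: "nat \<Rightarrow> nat \<Rightarrow> bool" where
  "path_adj i j = (j = i + 1 \<or> i = j + 1)"

definition pendant_path_count :: "nat \<Rightarrow> nat \<Rightarrow> nat" where
  "pendant_path_count n k =
     card (indep_sets_containing (pendant_vertices (path_vertices n)) (pendant_adj path_adj) n (Inr k))"

end

theory Submission
  imports Defs
begin

definition XX :: "nat \<Rightarrow> nat \<Rightarrow> nat set set" where
  "XX n k = {A. A \<subseteq> {1..n} - {k} \<and> (\<forall>i\<in>A. Suc i \<notin> A)}"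

lemma card_sum_img:
  assumes "finite A" "finite B"
  shows "card (Inl ` A \<union> Inr ` B) = card A + card B"
  using assms by (subst card_Un_disjoint) (auto simp: card_image)

lemma step1:
  assumes k: "k \<in> {1..n}"
  shows "pendant_path_count n k = card (XX n k)"
proof -
  let ?I = "indep_sets_containing (pendant_vertices (path_vertices n)) (pendant_adj path_adj) n (Inr k)"
  let ?phi = "\<lambda>S. Inl -` S :: nat set"
  let ?psi = "\<lambda>A. Inl ` A \<union> Inr ` ({1..n} - A) :: (nat + nat) set"
  have cover: "S = ?psi (?phi S)" if S: "S \<in> ?I" for S
  proof -
    define A where "A = Inl -` S"
    define B where "B = Inr -` S"
    have "S \<subseteq> {1..n} <+> {1..n}"
      using S by (simp add: indep_sets_containing_def pendant_vertices_def path_vertices_def)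
    then have sub: "S \<subseteq> Inl ` {1..n} \<union> Inr ` {1..n}" by (simp add: Plus_def)
    have AB: "A \<subseteq> {1..n}" "B \<subseteq> {1..n}" using sub by (auto simp: A_def B_def)
    have Seq: "S = Inl ` A \<union> Inr ` B"
    proof
      show "S \<subseteq> Inl ` A \<union> Inr ` B"
      proof
        fix x assume "x \<in> S" then show "x \<in> Inl ` A \<union> Inr ` B"
          by (cases x) (auto simp: A_def B_def)
      qed
    qed (auto simp: A_def B_def)
    have disj: "A \<inter> B = {}"
    proof -
      { fix i assume "i \<in> A" "i \<in> B"
        then have "Inl i \<in> S" "Inr i \<in> S" by (auto simp: A_def B_def)
        moreover have "\<forall>x\<in>S. \<forall>y\<in>S. \<not> pendant_adj path_adj x y" using S by (simp add: indep_sets_containing_def)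
        ultimately have "\<not> pendant_adj path_adj (Inl i) (Inr i)" by blast
        then have False by simp }
      then show ?thesis by blast
    qed
    have fin: "finite A" "finite B" using AB finite_subset by auto
    have "card S = n" using S by (simp add: indep_sets_containing_def)
    then have "card A + card B = n" using Seq card_sum_img[OF fin] by simp
    then have "card (A \<union> B) = card {1..n}" using card_Un_disjoint[OF fin disj] by simp
    then have "A \<union> B = {1..n}" using AB by (intro card_subset_eq) auto
    then have "B = {1..n} - A" using disj by blast
    then show ?thesis using Seq unfolding A_def[symmetric] by simp
  qed
  have "bij_betw ?phi ?I (XX n k)"
  proof (rule bij_betw_byWitness[where f'="?psi"])
    show "\<forall>S\<in>?I. ?psi (?phi S) = S" using cover by auto
    show "\<forall>A\<in>XX n k. ?phi (?psi A) = A" by (auto simp: XX_def)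
    show "?phi ` ?I \<subseteq> XX n k"
    proof
      fix A assume "A \<in> ?phi ` ?I"
      then obtain S where S: "S \<in> ?I" and A: "A = ?phi S" by auto
      have Sp: "S = ?psi A" using cover[OF S] A by simp
      have "Inr k \<in> S" using S by (simp add: indep_sets_containing_def)
      then have kA: "k \<notin> A" using Sp by auto
      have "S \<subseteq> {1..n} <+> {1..n}"
        using S by (simp add: indep_sets_containing_def pendant_vertices_def path_vertices_def)
      then have "A \<subseteq> {1..n}" using A by blast
      moreover have "\<forall>i\<in>A. Suc i \<notin> A"
      proof (intro ballI notI)
        fix i assume "i \<in> A" "Suc i \<in> A"
        then have "Inl i \<in> S" "Inl (Suc i) \<in> S" using A by auto
        moreover have "\<forall>x\<in>S. \<forall>y\<in>S. \<not> pendant_adj path_adj x y" using S by (simp add: indep_sets_containing_def)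
        ultimately have "\<not> pendant_adj path_adj (Inl i) (Inl (Suc i))" by blast
        then show False by (simp add: path_adj_def)
      qed
      ultimately show "A \<in> XX n k" using kA by (auto simp: XX_def)
    qed
    show "?psi ` XX n k \<subseteq> ?I"
    proof
      fix S assume "S \<in> ?psi ` XX n k"
      then obtain A where A: "A \<in> XX n k" and S: "S = ?psi A" by auto
      have Asub: "A \<subseteq> {1..n}" "k \<notin> A" and nc: "\<forall>i\<in>A. Suc i \<notin> A" using A by (auto simp: XX_def)
      have fA: "finite A" using Asub finite_subset by auto
      have "card S = card A + card ({1..n} - A)" using S card_sum_img[OF fA, of "{1..n} - A"] by simp
      also have "\<dots> = n"
      proof -
        have "card A \<le> card {1..n}" using Asub(1) by (intro card_mono) auto
        then show ?thesis using card_Diff_subset[OF fA Asub(1)] by simp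
      qed
      finally have cS: "card S = n" .
      have ind: "\<forall>x\<in>S. \<forall>y\<in>S. \<not> pendant_adj path_adj x y"
      proof (intro ballI)
        fix x y assume xS: "x \<in> S" and yS: "y \<in> S"
        show "\<not> pendant_adj path_adj x y"
        proof (cases x)
          case (Inl a)
          then have a: "a \<in> A" using xS S by auto
          show ?thesis
          proof (cases y)
            case (Inl b)
            then have b: "b \<in> A" using yS S by auto
            have "b \<noteq> Suc a" "a \<noteq> Suc b" using a b nc by blast+
            then show ?thesis using \<open>x = Inl a\<close> Inl by (simp add: path_adj_def)
          next
            case (Inr b)
            then have b: "b \<notin> A" using yS S by auto
            then show ?thesis using a \<open>x = Inl a\<close> Inr by auto
          qed
        next
          case (Inr a)
          then have a: "a \<notin> A" using xS S by auto
          show ?thesis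
          proof (cases y)
            case (Inl b)
            then have b: "b \<in> A" using yS S by auto
            then show ?thesis using a \<open>x = Inr a\<close> Inl by auto
          next
            case (Inr b)
            then show ?thesis using \<open>x = Inr a\<close> by simp
          qed
        qed
      qed
      have "S \<subseteq> pendant_vertices (path_vertices n)"
        using S Asub by (auto simp: pendant_vertices_def path_vertices_def)
      moreover have "Inr k \<in> S" using S Asub k by auto
      ultimately show "S \<in> ?I" using cS ind by (simp add: indep_sets_containing_def)
    qed
  qed
  then show ?thesis unfolding pendant_path_count_def path_vertices_def
    by (simp add: bij_betw_same_card)
qed

definition QQ :: "nat \<Rightarrow> nat \<Rightarrow> nat set set" where
  "QQ m s = {A. A \<subseteq> {s..<s+m} \<and> (\<forall>i\<in>A. Suc i \<notin> A)}"

fun ff :: "nat \<Rightarrow> nat" where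
  "ff 0 = 1" | "ff (Suc 0) = 2" | "ff (Suc (Suc m)) = ff (Suc m) + ff m"

lemma QQ_finite: "finite (QQ m s)"
  by (rule finite_subset[of _ "Pow {s..<s+m}"]) (auto simp: QQ_def)

lemma QQ0: "QQ 0 s = {{}}" by (auto simp: QQ_def)
lemma QQ1: "QQ (Suc 0) s = {{}, {s}}" by (auto simp: QQ_def)

lemma QQ_rec: "QQ (Suc (Suc m)) s = QQ (Suc m) (Suc s) \<union> insert s ` QQ m (Suc (Suc s))"
proof
  show "QQ (Suc (Suc m)) s \<subseteq> QQ (Suc m) (Suc s) \<union> insert s ` QQ m (Suc (Suc s))"
  proof
    fix A assume A: "A \<in> QQ (Suc (Suc m)) s"
    show "A \<in> QQ (Suc m) (Suc s) \<union> insert s ` QQ m (Suc (Suc s))"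
    proof (cases "s \<in> A")
      case True
      then have "Suc s \<notin> A" using A by (auto simp: QQ_def)
      then have "A - {s} \<in> QQ m (Suc (Suc s))" using A unfolding QQ_def
        by (auto simp: subset_iff) (metis atLeastLessThan_iff le_antisym not_less_eq_eq)
      moreover have "A = insert s (A - {s})" using True by auto
      ultimately show ?thesis by blast
    next
      case False
      have "A \<subseteq> {Suc s..<Suc s + Suc m}"
      proof
        fix x assume "x \<in> A"
        then have "x \<in> {s..<s + Suc (Suc m)}" using A by (auto simp: QQ_def)
        then show "x \<in> {Suc s..<Suc s + Suc m}" using False \<open>x \<in> A\<close>
          by (cases "x = s") auto
      qed
      then have "A \<in> QQ (Suc m) (Suc s)" using A by (auto simp: QQ_def)
      then show ?thesis by blast
    qed
  qed
  show "QQ (Suc m) (Suc s) \<union> insert s ` QQ m (Suc (Suc s)) \<subseteq> QQ (Suc (Suc m)) s"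
    by (auto simp: QQ_def)
qed

lemma card_QQ: "card (QQ m s) = ff m"
proof (induction m arbitrary: s rule: ff.induct)
  case 1 then show ?case by (simp add: QQ0)
next
  case 2 then show ?case by (simp add: QQ1)
next
  case (3 m)
  have inj: "inj_on (insert s) (QQ m (Suc (Suc s)))"
  proof (rule inj_onI)
    fix x y assume x: "x \<in> QQ m (Suc (Suc s))" and y: "y \<in> QQ m (Suc (Suc s))"
      and e: "insert s x = insert s y"
    have "s \<notin> x" "s \<notin> y" using x y by (auto simp: QQ_def)
    then show "x = y" using e by (metis insert_ident)
  qed
  have disj: "QQ (Suc m) (Suc s) \<inter> insert s ` QQ m (Suc (Suc s)) = {}"
    by (auto simp: QQ_def)
  have "card (QQ (Suc (Suc m)) s) = card (QQ (Suc m) (Suc s)) + card (insert s ` QQ m (Suc (Suc s)))"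
    unfolding QQ_rec by (rule card_Un_disjoint) (auto simp: QQ_finite disj)
  also have "\<dots> = ff (Suc m) + ff m" using 3 card_image[OF inj] by simp
  finally show ?case by simp
qed

lemma XX_split:
  assumes k: "k \<in> {1..n}"
  shows "XX n k = (\<lambda>(B,C). B \<union> C) ` (QQ (k-1) 1 \<times> QQ (n-k) (Suc k))"
proof
  show "XX n k \<subseteq> (\<lambda>(B,C). B \<union> C) ` (QQ (k-1) 1 \<times> QQ (n-k) (Suc k))"
  proof
    fix A assume A: "A \<in> XX n k"
    have "{x\<in>A. x < k} \<in> QQ (k-1) 1" using A k by (auto simp: XX_def QQ_def)
    moreover have "{x\<in>A. x > k} \<in> QQ (n-k) (Suc k)" using A k by (auto simp: XX_def QQ_def)
    moreover have "A = {x\<in>A. x < k} \<union> {x\<in>A. x > k}" using A by (auto simp: XX_def)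
    ultimately show "A \<in> (\<lambda>(B,C). B \<union> C) ` (QQ (k-1) 1 \<times> QQ (n-k) (Suc k))"
      by (auto intro!: image_eqI[where x="({x\<in>A. x < k}, {x\<in>A. x > k})"])
  qed
  show "(\<lambda>(B,C). B \<union> C) ` (QQ (k-1) 1 \<times> QQ (n-k) (Suc k)) \<subseteq> XX n k"
  proof
    fix A assume "A \<in> (\<lambda>(B,C). B \<union> C) ` (QQ (k-1) 1 \<times> QQ (n-k) (Suc k))"
    then obtain B C where B: "B \<in> QQ (k-1) 1" and C: "C \<in> QQ (n-k) (Suc k)" and A: "A = B \<union> C"
      by auto
    have Bs: "B \<subseteq> {1..<k}" and Cs: "C \<subseteq> {Suc k..<Suc n}" using B C k by (auto simp: QQ_def)
    show "A \<in> XX n k"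
      unfolding XX_def
    proof (intro CollectI conjI)
      show "A \<subseteq> {1..n} - {k}"
      proof
        fix x assume "x \<in> A"
        then have "x \<in> {1..<k} \<or> x \<in> {Suc k..<Suc n}" using A Bs Cs by auto
        then show "x \<in> {1..n} - {k}" using k by auto
      qed
      show "\<forall>i\<in>A. Suc i \<notin> A"
      proof
        fix i assume "i \<in> A"
        then show "Suc i \<notin> A" using A B C Bs Cs
          by (auto simp: QQ_def) (use subsetD in fastforce)+
      qed
    qed
  qed
qed

lemma count_formula:
  assumes k: "k \<in> {1..n}"
  shows "pendant_path_count n k = ff (k-1) * ff (n-k)"
proof -
  have inj: "inj_on (\<lambda>(B,C). B \<union> C) (QQ (k-1) 1 \<times> QQ (n-k) (Suc k))"
  proof (rule inj_onI, clarify)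
    fix B C B' C'
    assume "B \<in> QQ (k-1) 1" "C \<in> QQ (n-k) (Suc k)" "B' \<in> QQ (k-1) 1" "C' \<in> QQ (n-k) (Suc k)"
      and eq: "B \<union> C = B' \<union> C'"
    then have s: "B \<subseteq> {..<k}" "B' \<subseteq> {..<k}" "C \<subseteq> {k<..}" "C' \<subseteq> {k<..}"
      using k by (auto simp: QQ_def)
    have "B = (B \<union> C) \<inter> {..<k}" using s by auto
    also have "\<dots> = (B' \<union> C') \<inter> {..<k}" using eq by simp
    also have "\<dots> = B'" using s by auto
    finally have "B = B'" .
    have "C = (B \<union> C) \<inter> {k<..}" using s by auto
    also have "\<dots> = (B' \<union> C') \<inter> {k<..}" using eq by simp
    also have "\<dots> = C'" using s by auto
    finally show "B = B' \<and> C = C'" using \<open>B = B'\<close> by simp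
  qed
  show ?thesis
    using step1[OF k] XX_split[OF k] card_image[OF inj]
    by (simp add: card_cartesian_product card_QQ)
qed

lemma ff_mono: "ff m \<le> ff (Suc m)"
  by (induction m rule: ff.induct) auto

lemma ff_prod: "ff a * ff b \<le> 2 * ff (a + b - 1)"
proof (induction a rule: ff.induct)
  case 1
  show ?case
  proof (cases b)
    case 0 then show ?thesis by simp
  next
    case (Suc c)
    then show ?thesis
    proof (cases c)
      case 0 then show ?thesis using Suc by simp
    next
      case (Suc d)
      then show ?thesis using \<open>b = Suc c\<close> ff_mono[of d] by simp
    qed
  qed
next
  case 2 then show ?case by simp
next
  case (3 a)
  have "ff (Suc (Suc a)) * ff b = ff (Suc a) * ff b + ff a * ff b" by (simp add: algebra_simps)
  also have "\<dots> \<le> 2 * ff (a + b) + 2 * ff (a + b - 1)" using 3 by (intro add_mono) auto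
  also have "\<dots> = 2 * ff (Suc (Suc a) + b - 1)"
  proof (cases "a + b")
    case 0 then show ?thesis by simp
  next
    case (Suc c) then show ?thesis by simp
  qed
  finally show ?case .
qed

theorem corollary1:
  fixes n :: nat
  assumes "n \<ge> 2"
  shows "\<forall>k\<in>{1..n}. pendant_path_count n k \<le> pendant_path_count n 2
                   \<and> pendant_path_count n k \<le> pendant_path_count n (n - 1)"
proof
  fix k assume k: "k \<in> {1..n}"
  have "pendant_path_count n k = ff (k-1) * ff (n-k)" using count_formula[OF k] .
  also have "\<dots> \<le> 2 * ff (k - 1 + (n - k) - 1)" by (rule ff_prod)
  also have "\<dots> = 2 * ff (n - 2)" using k by (simp add: algebra_simps numeral_2_eq_2)
  finally have le: "pendant_path_count n k \<le> 2 * ff (n - 2)" .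
  have "pendant_path_count n 2 = 2 * ff (n - 2)"
    using count_formula[of 2 n] assms by simp
  moreover have "pendant_path_count n (n - 1) = 2 * ff (n - 2)"
    using count_formula[of "n-1" n] assms
    by (simp add: numeral_2_eq_2 Suc_diff_Suc diff_diff_left)
  ultimately show "pendant_path_count n k \<le> pendant_path_count n 2
                   \<and> pendant_path_count n k \<le> pendant_path_count n (n - 1)" using le by simp
qed

end
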